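(* Let $n,d\in\mathbb{N}$, $\mu\in(0,n]$, $q\in(0,d]$, and let $f\colon\mathbb{R}^n\to\mathbb{R}^d$ be continuous. For $E\subset\mathbb{R}^n$ define $$\Phi(E)=\inf\Bigl\{\sum_\alpha(\operatorname{diam}D_\alpha)^{\mu}[\operatorname{diam}f(D_\alpha)]^q:\ D_\alpha\text{ compact},\ E\subset\bigcup_{\alpha\in\mathbb{N}}D_\alpha\Bigr\}.$$ Then $\Phi$ is countably subadditive, and for every $E\subset\mathbb{R}^n$ with $\Phi(E)=0$ we have $\mathcal{H}^\mu\bigl(E\cap f^{-1}(y)\bigr)=0$ for $\mathcal{H}^q$-almost all $y\in\mathbb{R}^d$. *)

theory Defs
  imports "HOL-Analysis.Analysis"
begin

text \<open>Unnormalised s-dimensional Hausdorff (outer) measure on a metric space.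
  Covers are countable families of bounded sets (boundedness is required because
  the library's diameter of an unbounded set is not meaningful).
  The normalisation constant is irrelevant for null sets.\<close>

definition hausdorff_pre :: "real \<Rightarrow> real \<Rightarrow> 'a::metric_space set \<Rightarrow> ennreal" where
  "hausdorff_pre s \<delta> A =
     (INF C \<in> {C :: nat \<Rightarrow> 'a set. A \<subseteq> (\<Union>i. C i) \<and> (\<forall>i. bounded (C i) \<and> diameter (C i) \<le> \<delta>)}.
        (\<Sum>i. ennreal (diameter (C i) powr s)))"

definition hausdorff_measure :: "real \<Rightarrow> 'a::metric_space set \<Rightarrow> ennreal" where
  "hausdorff_measure s A = (SUP \<delta> \<in> {0<..}. hausdorff_pre s \<delta> A)"

definition Phi :: "real \<Rightarrow> real \<Rightarrow> ('a::metric_space \<Rightarrow> 'b::metric_space) \<Rightarrow> 'a set \<Rightarrow> ennreal" where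
  "Phi \<mu> q f E =
     (INF D \<in> {D :: nat \<Rightarrow> 'a set. (\<forall>i. compact (D i)) \<and> E \<subseteq> (\<Union>i. D i)}.
        (\<Sum>i. ennreal ((diameter (D i)) powr \<mu> * (diameter (f ` D i)) powr q)))"

end

theory Submission
  imports Defs
begin

lemma merge_covers_Un:
  fixes C :: "nat \<Rightarrow> nat \<Rightarrow> 'a set"
  shows "(\<Union>k. \<Union>i. C k i) = (\<Union>n. case_prod C (prod_decode n))"
proof
  show "(\<Union>k. \<Union>i. C k i) \<subseteq> (\<Union>n. case_prod C (prod_decode n))"
  proof
    fix x assume "x \<in> (\<Union>k. \<Union>i. C k i)"
    then obtain k i where "x \<in> C k i" by blast
    moreover have "prod_decode (prod_encode (k,i)) = (k,i)" by (rule prod_encode_inverse)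
    ultimately have "x \<in> case_prod C (prod_decode (prod_encode (k,i)))" by (simp only: case_prod_conv)
    then show "x \<in> (\<Union>n. case_prod C (prod_decode n))" by (rule UN_I[OF UNIV_I])
  qed
next
  show "(\<Union>n. case_prod C (prod_decode n)) \<subseteq> (\<Union>k. \<Union>i. C k i)"
    by (auto split: prod.splits)
qed

lemma merge_covers_sum:
  fixes C :: "nat \<Rightarrow> nat \<Rightarrow> 'a set" and g :: "'a set \<Rightarrow> ennreal"
  shows "(\<Sum>n. g (case_prod C (prod_decode n))) = (\<Sum>k. \<Sum>i. g (C k i))"
  using suminf_ennreal_2dimen[of "\<lambda>k. \<Sum>i. g (C k i)" "\<lambda>(k,i). g (C k i)"]
  by (simp add: case_prod_beta')

lemma half_series_ennreal: "(\<Sum>k. ennreal (e / 2 ^ Suc k)) = ennreal e" if "0 \<le> e" for e :: real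
proof -
  have s0: "(\<lambda>k. e * (1/2::real) ^ Suc k) sums (e * 1)"
    using power_half_series by (rule sums_mult)
  have eq: "(\<lambda>k. e * (1/2::real) ^ Suc k) = (\<lambda>k. e / 2 ^ Suc k)"
    by (rule ext) (simp only: power_one_over times_divide_eq_right mult.right_neutral)
  have s: "(\<lambda>k. e / 2 ^ Suc k) sums e" using s0 unfolding eq mult.right_neutral .
  have nn: "\<And>k. 0 \<le> e / 2 ^ Suc k" using that by simp
  have u: "(\<Sum>k. e / 2 ^ Suc k) = e" using s by (rule sums_unique[symmetric])
  show ?thesis using suminf_ennreal2[OF nn sums_summable[OF s]] u by (simp only:)
qed

lemma ennreal_term_le_suminf: "f i \<le> (\<Sum>i. f i)" for f :: "nat \<Rightarrow> ennreal"
  using sum_le_suminf[of f "{i}"] by (simp add: summableI)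

lemma Phi_subadd:
  fixes f :: "'a::metric_space \<Rightarrow> 'b::metric_space"
  shows "Phi \<mu> q f (\<Union>i. E i) \<le> (\<Sum>i. Phi \<mu> q f (E i))"
proof (rule ennreal_le_epsilon)
  fix e :: real assume top: "(\<Sum>i. Phi \<mu> q f (E i)) < top" and e: "0 < e"
  let ?g = "\<lambda>D. ennreal ((diameter D) powr \<mu> * (diameter (f ` D)) powr q)"
  have "\<forall>i. \<exists>D. (\<forall>j. compact (D j)) \<and> E i \<subseteq> (\<Union>j. D j) \<and> (\<Sum>j. ?g (D j)) < Phi \<mu> q f (E i) + ennreal (e / 2 ^ Suc i)"
  proof
    fix i
    have "Phi \<mu> q f (E i) \<le> (\<Sum>i. Phi \<mu> q f (E i))"
      by (rule ennreal_term_le_suminf)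
    then have fin: "Phi \<mu> q f (E i) < top" using top by auto
    have "Phi \<mu> q f (E i) < Phi \<mu> q f (E i) + ennreal (e / 2 ^ Suc i)"
      using fin e ennreal_add_left_cancel_less[of "Phi \<mu> q f (E i)" 0 "ennreal (e / 2 ^ Suc i)"] by simp
    then show "\<exists>D. (\<forall>j. compact (D j)) \<and> E i \<subseteq> (\<Union>j. D j) \<and> (\<Sum>j. ?g (D j)) < Phi \<mu> q f (E i) + ennreal (e / 2 ^ Suc i)" unfolding Phi_def by (subst (asm) INF_less_iff) auto
  qed
  from choice[OF this] obtain D where D: "\<And>i. (\<forall>j. compact (D i j)) \<and> E i \<subseteq> (\<Union>j. D i j) \<and> (\<Sum>j. ?g (D i j)) < Phi \<mu> q f (E i) + ennreal (e / 2 ^ Suc i)"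
    by blast
  let ?D = "\<lambda>n. case_prod D (prod_decode n)"
  have Ei: "E i \<subseteq> (\<Union>j. D i j)" for i using D by blast
  have "(\<Union>i. E i) \<subseteq> (\<Union>k. \<Union>j. D k j)"
  proof (rule UN_least)
    fix i show "E i \<subseteq> (\<Union>k. \<Union>j. D k j)"
      by (rule order_trans[OF Ei[of i]]) (rule UN_upper, rule UNIV_I)
  qed
  also have "\<dots> = (\<Union>n. ?D n)" by (rule merge_covers_Un)
  finally have cov: "(\<Union>i. E i) \<subseteq> (\<Union>n. ?D n)" .
  have Dc: "compact (D k j)" for k j using D by blast
  have cpt: "\<forall>n. compact (?D n)"
  proof
    fix n show "compact (?D n)" using Dc by (cases "prod_decode n") simp
  qed
  have "Phi \<mu> q f (\<Union>i. E i) \<le> (\<Sum>n. ?g (?D n))"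
    unfolding Phi_def using cov cpt by (intro INF_lower) auto
  also have "\<dots> = (\<Sum>k. \<Sum>j. ?g (D k j))" by (rule merge_covers_sum)
  also have "\<dots> \<le> (\<Sum>k. Phi \<mu> q f (E k) + ennreal (e / 2 ^ Suc k))"
  proof (rule suminf_le)
    fix k show "(\<Sum>j. ?g (D k j)) \<le> Phi \<mu> q f (E k) + ennreal (e / 2 ^ Suc k)"
      using D[of k] by (simp add: less_imp_le)
  qed auto
  also have "\<dots> = (\<Sum>k. Phi \<mu> q f (E k)) + (\<Sum>k. ennreal (e / 2 ^ Suc k))"
    by (rule suminf_add[symmetric]) auto
  also have "\<dots> = (\<Sum>k. Phi \<mu> q f (E k)) + ennreal e"
    using half_series_ennreal[of e] e by (metis less_imp_le)
  finally show "Phi \<mu> q f (\<Union>i. E i) \<le> (\<Sum>i. Phi \<mu> q f (E i)) + ennreal e" .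
qed

lemma null_crit:
  fixes A :: "'a::metric_space set"
  assumes q: "0 < q"
    and H: "\<And>e. 0 < e \<Longrightarrow> \<exists>C. A \<subseteq> (\<Union>i. C i) \<and> (\<forall>i. bounded (C i)) \<and> (\<Sum>i. ennreal (diameter (C i) powr q)) < ennreal e"
  shows "hausdorff_measure q A = 0"
proof -
  have pre0: "hausdorff_pre q \<delta> A = 0" if \<delta>: "0 < \<delta>" for \<delta>
  proof (rule antisym)
    show "hausdorff_pre q \<delta> A \<le> 0"
    proof (rule ennreal_le_epsilon)
      fix e :: real assume e: "0 < e"
      define e' where "e' = min e (\<delta> powr q)"
      have e': "0 < e'" using e \<delta> by (simp add: e'_def)
      obtain C where C: "A \<subseteq> (\<Union>i. C i)" "\<forall>i. bounded (C i)"
        "(\<Sum>i. ennreal (diameter (C i) powr q)) < ennreal e'"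
        using H[OF e'] by blast
      have dC: "diameter (C i) \<le> \<delta>" for i
      proof (rule ccontr)
        assume "\<not> diameter (C i) \<le> \<delta>"
        then have "\<delta> powr q \<le> diameter (C i) powr q"
          using \<delta> q by (intro powr_mono2) auto
        moreover have "ennreal (diameter (C i) powr q) \<le> (\<Sum>i. ennreal (diameter (C i) powr q))"
          by (rule ennreal_term_le_suminf)
        then have "ennreal (diameter (C i) powr q) < ennreal e'" using C(3) by (rule le_less_trans)
        then have "diameter (C i) powr q < e'"
          using e' by (simp add: ennreal_less_iff)
        ultimately show False unfolding e'_def by linarith
      qed
      have "hausdorff_pre q \<delta> A \<le> (\<Sum>i. ennreal (diameter (C i) powr q))"
        unfolding hausdorff_pre_def by (rule INF_lower) (use C dC in blast)
      also have "\<dots> \<le> ennreal e"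
        using C(3) e'_def by (meson ennreal_leI le_less_trans less_imp_le min.cobounded1 not_le)
      finally show "hausdorff_pre q \<delta> A \<le> 0 + ennreal e" by simp
    qed
  qed simp
  have "hausdorff_measure q A = (SUP \<delta>\<in>{0::real<..}. (0::ennreal))"
    unfolding hausdorff_measure_def by (rule SUP_cong) (simp_all add: pre0)
  also have "\<dots> = 0" by simp
  finally show ?thesis .
qed

lemma vitali_step:
  fixes x :: "'i \<Rightarrow> 'b::euclidean_space" and r :: "'i \<Rightarrow> real"
  assumes F: "finite F" and r: "\<And>i. i \<in> F \<Longrightarrow> 0 < r i"
  shows "\<exists>G\<subseteq>F. pairwise (\<lambda>i j. disjnt (cball (x i) (r i)) (cball (x j) (r j))) G \<and>
           (\<Union>i\<in>F. cball (x i) (r i)) \<subseteq> (\<Union>i\<in>G. cball (x i) (5 * r i))"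
proof -
  have rB: "0 < r i \<and> r i \<le> (\<Sum>j\<in>F. r j)" if "i \<in> F" for i
  proof
    show "0 < r i" using r that .
    show "r i \<le> (\<Sum>j\<in>F. r j)" by (rule member_le_sum) (use that F r in \<open>auto intro: less_imp_le\<close>)
  qed
  obtain G where "countable G" "G \<subseteq> F"
     "pairwise (\<lambda>i j. disjnt (cball (x i) (r i)) (cball (x j) (r j))) G"
     "(\<Union>i\<in>F. cball (x i) (r i)) \<subseteq> (\<Union>i\<in>G. cball (x i) (5 * r i))"
    using Vitali_covering_lemma_cballs[where S="\<Union>i\<in>F. cball (x i) (r i)" and K=F and a=x and r=r, OF order_refl rB]
    by blast
  then show ?thesis by blast
qed

lemma card_disj_le1:
  fixes x :: "'i \<Rightarrow> 'b::euclidean_space"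
  assumes "finite G" "pairwise (\<lambda>i j. disjnt (cball (x i) (r i)) (cball (x j) (r j))) G"
  shows "card {i\<in>G. y \<in> cball (x i) (r i)} \<le> 1"
proof -
  have "\<forall>a1\<in>{i\<in>G. y \<in> cball (x i) (r i)}. \<forall>a2\<in>{i\<in>G. y \<in> cball (x i) (r i)}. a1 = a2"
  proof (intro ballI)
    fix a1 a2 assume a1: "a1 \<in> {i\<in>G. y \<in> cball (x i) (r i)}" and a2: "a2 \<in> {i\<in>G. y \<in> cball (x i) (r i)}"
    show "a1 = a2"
    proof (rule ccontr)
      assume "a1 \<noteq> a2"
      with assms(2) a1 a2 have "disjnt (cball (x a1) (r a1)) (cball (x a2) (r a2))"
        unfolding pairwise_def by blast
      with a1 a2 show False unfolding disjnt_def by blast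
    qed
  qed
  then show ?thesis using assms(1) card_le_Suc0_iff_eq[of "{i\<in>G. y \<in> cball (x i) (r i)}"] by simp
qed

lemma mult_cover:
  fixes x :: "'i \<Rightarrow> 'b::euclidean_space" and r :: "'i \<Rightarrow> real"
  assumes "finite F" "\<And>i. i \<in> F \<Longrightarrow> 0 < r i"
  shows "\<exists>J\<subseteq>F. {y. Suc m \<le> card {i\<in>F. y \<in> cball (x i) (r i)}} \<subseteq> (\<Union>i\<in>J. cball (x i) (5 * r i)) \<and>
     real (Suc m) * (\<Sum>i\<in>J. (10 * r i) powr q) \<le> (\<Sum>i\<in>F. (10 * r i) powr q)"
  using assms
proof (induction m arbitrary: F)
  case 0
  obtain G where G: "G \<subseteq> F" "(\<Union>i\<in>F. cball (x i) (r i)) \<subseteq> (\<Union>i\<in>G. cball (x i) (5 * r i))"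
    using vitali_step[of F r x] 0 by blast
  have "{y. Suc 0 \<le> card {i\<in>F. y \<in> cball (x i) (r i)}} \<subseteq> (\<Union>i\<in>F. cball (x i) (r i))"
  proof
    fix y assume "y \<in> {y. Suc 0 \<le> card {i\<in>F. y \<in> cball (x i) (r i)}}"
    then have "0 < card {i\<in>F. y \<in> cball (x i) (r i)}" by simp
    then have "{i\<in>F. y \<in> cball (x i) (r i)} \<noteq> {}" by (metis card.empty less_irrefl)
    then show "y \<in> (\<Union>i\<in>F. cball (x i) (r i))" by blast
  qed
  moreover have "(\<Sum>i\<in>G. (10 * r i) powr q) \<le> (\<Sum>i\<in>F. (10 * r i) powr q)"
    using G(1) 0(1) by (intro sum_mono2) auto
  ultimately show ?case using G by (intro exI[of _ G]) auto
next
  case (Suc m)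
  obtain G where G: "G \<subseteq> F" "pairwise (\<lambda>i j. disjnt (cball (x i) (r i)) (cball (x j) (r j))) G"
      "(\<Union>i\<in>F. cball (x i) (r i)) \<subseteq> (\<Union>i\<in>G. cball (x i) (5 * r i))"
    using vitali_step[of F r x] Suc.prems by blast
  have finG: "finite G" using G(1) Suc.prems(1) by (rule finite_subset)
  obtain J' where J': "J' \<subseteq> F - G"
     "{y. Suc m \<le> card {i\<in>F - G. y \<in> cball (x i) (r i)}} \<subseteq> (\<Union>i\<in>J'. cball (x i) (5 * r i))"
     "real (Suc m) * (\<Sum>i\<in>J'. (10 * r i) powr q) \<le> (\<Sum>i\<in>F - G. (10 * r i) powr q)"
    using Suc.IH[of "F - G"] Suc.prems by auto
  define a where "a = (\<Sum>i\<in>G. (10 * r i) powr q)"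
  define b where "b = (\<Sum>i\<in>F - G. (10 * r i) powr q)"
  define c where "c = (\<Sum>i\<in>J'. (10 * r i) powr q)"
  have ab: "(\<Sum>i\<in>F. (10 * r i) powr q) = b + a"
    unfolding a_def b_def using sum.subset_diff[OF G(1) Suc.prems(1)] .
  let ?M = "{y. Suc (Suc m) \<le> card {i\<in>F. y \<in> cball (x i) (r i)}}"
  have M1: "?M \<subseteq> (\<Union>i\<in>G. cball (x i) (5 * r i))"
  proof
    fix y assume "y \<in> ?M"
    then have "0 < card {i\<in>F. y \<in> cball (x i) (r i)}" by simp
    then have "{i\<in>F. y \<in> cball (x i) (r i)} \<noteq> {}" by (metis card.empty less_irrefl)
    then have "y \<in> (\<Union>i\<in>F. cball (x i) (r i))" by blast
    then show "y \<in> (\<Union>i\<in>G. cball (x i) (5 * r i))" using G(3) by blast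
  qed
  have M2: "?M \<subseteq> (\<Union>i\<in>J'. cball (x i) (5 * r i))"
  proof
    fix y assume y: "y \<in> ?M"
    have split: "{i\<in>F. y \<in> cball (x i) (r i)} = {i\<in>G. y \<in> cball (x i) (r i)} \<union> {i\<in>F - G. y \<in> cball (x i) (r i)}"
      using G(1) by blast
    have "card {i\<in>F. y \<in> cball (x i) (r i)} = card {i\<in>G. y \<in> cball (x i) (r i)} + card {i\<in>F - G. y \<in> cball (x i) (r i)}"
      unfolding split using Suc.prems(1) finG by (intro card_Un_disjoint) auto
    moreover have "card {i\<in>G. y \<in> cball (x i) (r i)} \<le> 1"
      using finG G(2) by (rule card_disj_le1)
    ultimately have "Suc m \<le> card {i\<in>F - G. y \<in> cball (x i) (r i)}" using y by simp
    then show "y \<in> (\<Union>i\<in>J'. cball (x i) (5 * r i))" using J'(2) by blast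
  qed
  show ?case
  proof (cases "real (Suc (Suc m)) * a \<le> b + a")
    case True
    then show ?thesis using G(1) M1 ab a_def by (intro exI[of _ G]) auto
  next
    case False
    have h1: "real (Suc m) * c \<le> b" using J'(3) unfolding b_def c_def .
    have h2: "b < real (Suc m) * a" using False by (simp add: algebra_simps)
    have "real (Suc m) * c < real (Suc m) * a" using h1 h2 by linarith
    then have "c < a" by (simp add: mult_less_cancel_left_pos)
    then have "real (Suc (Suc m)) * c \<le> b + a" using h1 by (simp add: algebra_simps)
    then show ?thesis using J'(1) M2 ab c_def by (intro exI[of _ J']) auto
  qed
qed

lemma finite_to_seq_cover:
  fixes S :: "'j \<Rightarrow> 'a::metric_space set"
  assumes J: "finite J" and b: "\<And>j. j \<in> J \<Longrightarrow> bounded (S j)"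
  shows "\<exists>C::nat \<Rightarrow> 'a set. (\<forall>i. bounded (C i)) \<and> (\<Union>j\<in>J. S j) \<subseteq> (\<Union>i. C i) \<and>
           (\<Sum>i. ennreal (diameter (C i) powr q)) = ennreal (\<Sum>j\<in>J. diameter (S j) powr q)"
proof -
  obtain h where h: "bij_betw h {0..<card J} J" using ex_bij_betw_nat_finite[OF J] by blast
  define C where "C = (\<lambda>k. if k < card J then S (h k) else {})"
  have hJ: "h k \<in> J" if "k < card J" for k using h that by (auto simp: bij_betw_def)
  have bC: "\<forall>i. bounded (C i)" using hJ b by (auto simp: C_def)
  have cov: "(\<Union>j\<in>J. S j) \<subseteq> (\<Union>i. C i)"
  proof
    fix y assume "y \<in> (\<Union>j\<in>J. S j)"
    then obtain j where j: "j \<in> J" "y \<in> S j" by blast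
    then obtain k where k: "k \<in> {0..<card J}" "h k = j" using h by (metis bij_betw_imp_surj_on imageE)
    then have "y \<in> C k" using j by (simp add: C_def)
    then show "y \<in> (\<Union>i. C i)" by blast
  qed
  have "(\<Sum>i. ennreal (diameter (C i) powr q)) = (\<Sum>i\<in>{0..<card J}. ennreal (diameter (C i) powr q))"
    by (rule suminf_finite) (auto simp: C_def)
  also have "\<dots> = ennreal (\<Sum>i\<in>{0..<card J}. diameter (C i) powr q)"
    by (rule sum_ennreal) simp
  also have "(\<Sum>i\<in>{0..<card J}. diameter (C i) powr q) = (\<Sum>i\<in>{0..<card J}. diameter (S (h i)) powr q)"
    by (rule sum.cong) (auto simp: C_def)
  also have "\<dots> = (\<Sum>j\<in>J. diameter (S j) powr q)"
    using h by (rule sum.reindex_bij_betw)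
  finally show ?thesis using bC cov by blast
qed

lemma weighted_finite:
  fixes x :: "nat \<Rightarrow> 'b::euclidean_space"
  assumes F: "finite F" and r: "\<And>i. 0 \<le> r i" and c: "\<And>i. 0 \<le> c i" and t: "0 < t"
    and q: "0 < q" and eta: "0 < \<eta>"
  shows "\<exists>C::nat \<Rightarrow> 'b set. (\<forall>i. bounded (C i)) \<and>
     {y. t < (\<Sum>i\<in>F. if y \<in> cball (x i) (r i) then c i else 0)} \<subseteq> (\<Union>i. C i) \<and>
     (\<Sum>i. ennreal (diameter (C i) powr q)) \<le> ennreal ((\<Sum>i\<in>F. c i * (10 * r i) powr q) / t + \<eta>)"
proof -
  define W where "W = (\<Sum>i\<in>F. c i * (10 * r i) powr q)"
  define R where "R = (\<Sum>i\<in>F. (10 * r i) powr q)"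
  have R0: "0 \<le> R" unfolding R_def by (intro sum_nonneg) simp
  have W0: "0 \<le> W" unfolding W_def using c by (intro sum_nonneg) simp
  define M :: nat where "M = nat \<lceil>2 * R / (\<eta> * t)\<rceil> + 1"
  have M1: "1 \<le> real M" unfolding M_def by simp
  have MR: "2 * R / (\<eta> * t) < real M" unfolding M_def by linarith
  have RM: "R < \<eta> * t * real M / 2"
  proof -
    have "2 * R < real M * (\<eta> * t)" using MR eta t by (simp add: divide_less_eq)
    then show ?thesis by (simp add: algebra_simps)
  qed
  define m where "m = (\<lambda>i. nat \<lceil>c i * real M\<rceil>)"
  have mge: "c i * real M \<le> real (m i)" for i
    unfolding m_def using c[of i] by (simp add: of_nat_nat ceiling_correct)
  have mle: "real (m i) \<le> c i * real M + 1" for i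
  proof -
    have "0 \<le> c i * real M" using c[of i] by simp
    then have "real (m i) = real_of_int \<lceil>c i * real M\<rceil>" unfolding m_def by simp
    then show ?thesis by linarith
  qed
  define S where "S = (\<Sum>i\<in>F. real (m i))"
  have S0: "0 \<le> S" unfolding S_def by (intro sum_nonneg) simp
  define \<kappa> where "\<kappa> = \<eta> * t / (2 * (S + 1))"
  have \<kappa>0: "0 < \<kappa>" unfolding \<kappa>_def using eta t S0 by simp
  have \<kappa>S: "\<kappa> * S \<le> \<eta> * t * real M / 2"
  proof -
    have "\<kappa> * S = \<eta> * t / 2 * (S / (S + 1))" unfolding \<kappa>_def by (simp add: field_simps)
    also have "\<dots> \<le> \<eta> * t / 2 * 1"
      using S0 eta t by (intro mult_left_mono) simp_all
    also have "\<dots> \<le> \<eta> * t / 2 * real M" using M1 eta t by (intro mult_left_mono) simp_all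
    finally show ?thesis by simp
  qed
  define \<rho> where "\<rho> = \<kappa> powr (1 / q) / 10"
  have \<rho>0: "0 < \<rho>" unfolding \<rho>_def using \<kappa>0 by simp
  have \<rho>q: "(10 * \<rho>) powr q = \<kappa>"
    unfolding \<rho>_def using \<kappa>0 q by (simp add: powr_powr)
  define rp where "rp = (\<lambda>i. max (r i) \<rho>)"
  have rp0: "0 < rp i" for i unfolding rp_def using \<rho>0 by simp
  have rpq: "(10 * rp i) powr q \<le> (10 * r i) powr q + \<kappa>" for i
  proof (cases "r i \<le> \<rho>")
    case True
    then have "rp i = \<rho>" unfolding rp_def by simp
    then show ?thesis using \<rho>q by simp
  next
    case False
    then have "rp i = r i" unfolding rp_def by simp
    then show ?thesis using \<kappa>0 by simp
  qed
  define F' where "F' = Sigma F (\<lambda>i. {..<m i})"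
  have F': "finite F'" unfolding F'_def using F by simp
  define N where "N = nat \<lfloor>real M * t\<rfloor>"
  obtain J where J: "J \<subseteq> F'"
    "{y. Suc N \<le> card {p\<in>F'. y \<in> cball (x (fst p)) (rp (fst p))}} \<subseteq> (\<Union>p\<in>J. cball (x (fst p)) (5 * rp (fst p)))"
    "real (Suc N) * (\<Sum>p\<in>J. (10 * rp (fst p)) powr q) \<le> (\<Sum>p\<in>F'. (10 * rp (fst p)) powr q)"
    using mult_cover[of F' "\<lambda>p. rp (fst p)" N "\<lambda>p. x (fst p)" q] F' rp0 by blast
  have finJ: "finite J" using J(1) F' by (rule finite_subset)
  have exC: "\<exists>C::nat \<Rightarrow> 'b set. (\<forall>i. bounded (C i)) \<and> (\<Union>p\<in>J. cball (x (fst p)) (5 * rp (fst p))) \<subseteq> (\<Union>i. C i) \<and>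
    (\<Sum>i. ennreal (diameter (C i) powr q)) = ennreal (\<Sum>p\<in>J. diameter (cball (x (fst p)) (5 * rp (fst p))) powr q)"
    by (rule finite_to_seq_cover[OF finJ]) (rule bounded_cball)
  then obtain C :: "nat \<Rightarrow> 'b set" where C0: "(\<forall>i. bounded (C i)) \<and> (\<Union>p\<in>J. cball (x (fst p)) (5 * rp (fst p))) \<subseteq> (\<Union>i. C i) \<and>
    (\<Sum>i. ennreal (diameter (C i) powr q)) = ennreal (\<Sum>p\<in>J. diameter (cball (x (fst p)) (5 * rp (fst p))) powr q)"
    by (rule exE)
  note C = conjunct1[OF C0] conjunct1[OF conjunct2[OF C0]] conjunct2[OF conjunct2[OF C0]]
  have diam: "diameter (cball (x (fst p)) (5 * rp (fst p))) = 10 * rp (fst p)" for p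
    using rp0[of "fst p"] by simp
  define P where "P = (\<Sum>p\<in>J. (10 * rp (fst p)) powr q)"
  have P0: "0 \<le> P" unfolding P_def by (intro sum_nonneg) simp
  have cov: "{y. t < (\<Sum>i\<in>F. if y \<in> cball (x i) (r i) then c i else 0)} \<subseteq> (\<Union>i. C i)"
  proof
    fix y assume "y \<in> {y. t < (\<Sum>i\<in>F. if y \<in> cball (x i) (r i) then c i else 0)}"
    then have y: "t < (\<Sum>i\<in>F. if y \<in> cball (x i) (r i) then c i else 0)" by simp
    define Fy where "Fy = {i\<in>F. y \<in> cball (x i) (r i)}"
    have finFy: "finite Fy" unfolding Fy_def using F by simp
    have "(\<Sum>i\<in>F. if y \<in> cball (x i) (r i) then c i else 0) = (\<Sum>i\<in>Fy. c i)"
      unfolding Fy_def using F by (simp add: sum.inter_filter)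
    with y have y2: "t < (\<Sum>i\<in>Fy. c i)" by simp
    have "real M * t < real M * (\<Sum>i\<in>Fy. c i)" using y2 M1 by simp
    also have "\<dots> = (\<Sum>i\<in>Fy. c i * real M)" by (simp add: sum_distrib_left mult.commute)
    also have "\<dots> \<le> (\<Sum>i\<in>Fy. real (m i))" using mge by (rule sum_mono)
    also have "(\<Sum>i\<in>Fy. real (m i)) = real (card (Sigma Fy (\<lambda>i. {..<m i})))"
      using finFy by simp
    finally have cardgt: "real M * t < real (card (Sigma Fy (\<lambda>i. {..<m i})))" .
    have sub1: "Sigma Fy (\<lambda>i. {..<m i}) \<subseteq> {p\<in>F'. y \<in> cball (x (fst p)) (rp (fst p))}"
    proof
      fix p assume "p \<in> Sigma Fy (\<lambda>i. {..<m i})"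
      then obtain i k where p: "p = (i, k)" "i \<in> Fy" "k < m i" by blast
      have "cball (x i) (r i) \<subseteq> cball (x i) (rp i)" unfolding rp_def by (rule subset_cball) simp
      then show "p \<in> {p\<in>F'. y \<in> cball (x (fst p)) (rp (fst p))}"
        using p unfolding Fy_def F'_def by auto
    qed
    have "card (Sigma Fy (\<lambda>i. {..<m i})) \<le> card {p\<in>F'. y \<in> cball (x (fst p)) (rp (fst p))}"
      using sub1 F' by (intro card_mono) auto
    moreover have "N < card (Sigma Fy (\<lambda>i. {..<m i}))"
    proof -
      have "real_of_int \<lfloor>real M * t\<rfloor> \<le> real M * t" by (rule of_int_floor_le)
      moreover have "0 \<le> real M * t" using t by simp
      ultimately have "real N \<le> real M * t" unfolding N_def by simp
      then show ?thesis using cardgt by linarith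
    qed
    ultimately have "Suc N \<le> card {p\<in>F'. y \<in> cball (x (fst p)) (rp (fst p))}" by simp
    then show "y \<in> (\<Union>i. C i)" using J(2) C(2) by blast
  qed
  have "(\<Sum>p\<in>F'. (10 * rp (fst p)) powr q) = (\<Sum>i\<in>F. \<Sum>k\<in>{..<m i}. (10 * rp i) powr q)"
    unfolding F'_def using F by (subst sum.Sigma) (auto simp: case_prod_beta)
  also have "\<dots> = (\<Sum>i\<in>F. real (m i) * (10 * rp i) powr q)" by simp
  also have "\<dots> \<le> (\<Sum>i\<in>F. real (m i) * ((10 * r i) powr q + \<kappa>))"
    using rpq by (intro sum_mono mult_left_mono) auto
  also have "\<dots> = (\<Sum>i\<in>F. real (m i) * (10 * r i) powr q) + \<kappa> * S"
    unfolding S_def by (simp add: distrib_left sum.distrib sum_distrib_left mult.commute)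
  also have "(\<Sum>i\<in>F. real (m i) * (10 * r i) powr q) \<le> (\<Sum>i\<in>F. (c i * real M + 1) * (10 * r i) powr q)"
    using mle by (intro sum_mono mult_right_mono) auto
  also have "\<dots> = real M * W + R"
    unfolding W_def R_def by (simp add: distrib_right sum.distrib sum_distrib_left algebra_simps)
  finally have FP: "(\<Sum>p\<in>F'. (10 * rp (fst p)) powr q) \<le> real M * W + R + \<kappa> * S" by simp
  have NP: "real (Suc N) * P \<le> real M * (W + \<eta> * t)"
    using J(3) FP RM \<kappa>S unfolding P_def by (simp add: algebra_simps)
  have Nge: "real M * t \<le> real (Suc N)"
  proof -
    have "real M * t < real_of_int \<lfloor>real M * t\<rfloor> + 1" by linarith
    moreover have "0 \<le> real M * t" using t by simp
    then have "real (Suc N) = real_of_int \<lfloor>real M * t\<rfloor> + 1" unfolding N_def by simp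
    ultimately show ?thesis by linarith
  qed
  have "real M * t * P \<le> real (Suc N) * P" using Nge P0 by (rule mult_right_mono)
  also have "\<dots> \<le> real M * (W + \<eta> * t)" by (rule NP)
  finally have "real M * (t * P) \<le> real M * (W + \<eta> * t)" by (simp add: mult.assoc)
  then have "t * P \<le> W + \<eta> * t" using M1 by simp
  then have Pb: "P \<le> W / t + \<eta>" using t by (simp add: field_simps)
  have "(\<Sum>i. ennreal (diameter (C i) powr q)) = ennreal P"
    using C(3) unfolding P_def diam .
  also have "\<dots> \<le> ennreal (W / t + \<eta>)" using Pb by (rule ennreal_leI)
  finally show ?thesis using C(1) cov unfolding W_def by blast
qed

lemma block_le_tail:
  fixes w :: "nat \<Rightarrow> real"
  assumes sm: "summable w" and w: "\<And>i. 0 \<le> w i" and ab: "a \<le> b"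
  shows "sum w {a..<b} \<le> (\<Sum>i. w (i + a))"
proof -
  have "sum w {0..<b} - sum w {0..<a} = sum w {a..<b}"
    using ab by (intro sum_diff_nat_ivl) auto
  then have e: "sum w {a..<b} = sum w {..<b} - sum w {..<a}" by (simp add: atLeast0LessThan)
  have "sum w {..<b} \<le> suminf w" using sm w by (intro sum_le_suminf) auto
  moreover have "(\<Sum>i. w (i + a)) = suminf w - sum w {..<a}"
    using sm by (rule suminf_minus_initial_segment)
  ultimately show ?thesis using e by linarith
qed

lemma sum_blocks:
  fixes g :: "nat \<Rightarrow> real"
  assumes mono: "\<And>j. n j \<le> n (Suc j)" and n0: "n 0 = 0"
  shows "sum g {..<n J} = (\<Sum>j<J. sum g {n j..<n (Suc j)})"
proof (induction J)
  case 0
  then show ?case using n0 by simp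
next
  case (Suc J)
  have "sum g {0..<n (Suc J)} - sum g {0..<n J} = sum g {n J..<n (Suc J)}"
    using mono[of J] by (intro sum_diff_nat_ivl) auto
  then have "sum g {..<n (Suc J)} = sum g {..<n J} + sum g {n J..<n (Suc J)}"
    by (simp add: atLeast0LessThan)
  then show ?case using Suc.IH by simp
qed

lemma half_sums: "(\<lambda>k. e / 2 ^ Suc k) sums e" for e :: real
proof -
  have s0: "(\<lambda>k. e * (1/2::real) ^ Suc k) sums (e * 1)"
    using power_half_series by (rule sums_mult)
  have eq: "(\<lambda>k. e * (1/2::real) ^ Suc k) = (\<lambda>k. e / 2 ^ Suc k)"
    by (rule ext) (simp only: power_one_over times_divide_eq_right mult.right_neutral)
  show ?thesis using s0 unfolding eq mult.right_neutral .
qed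

lemma aux_div:
  fixes W e t a :: real
  assumes "0 < t" "0 < a" "W * (a * a) \<le> e * t"
  shows "W / (t / a) \<le> e / a"
  using assms by (simp add: field_simps)

lemma weighted_countable:
  fixes x :: "nat \<Rightarrow> 'b::euclidean_space"
  assumes r: "\<And>i. 0 \<le> r i" and c: "\<And>i. 0 \<le> c i" and t: "0 < t" and q: "0 < q" and eta: "0 < \<eta>"
    and sm: "summable (\<lambda>i. c i * (10 * r i) powr q)"
  shows "\<exists>C::nat \<Rightarrow> 'b set. (\<forall>i. bounded (C i)) \<and>
     {y. ennreal t < (\<Sum>i. ennreal (if y \<in> cball (x i) (r i) then c i else 0))} \<subseteq> (\<Union>i. C i) \<and>
     (\<Sum>i. ennreal (diameter (C i) powr q)) \<le> ennreal (4 * ((\<Sum>i. c i * (10 * r i) powr q) / t + \<eta>))"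
proof -
  define w where "w = (\<lambda>i. c i * (10 * r i) powr q)"
  define K where "K = suminf w"
  have w0: "0 \<le> w i" for i unfolding w_def using c[of i] by simp
  have smw: "summable w" using sm unfolding w_def .
  have K0: "0 \<le> K" unfolding K_def using smw w0 by (rule suminf_nonneg)
  have "\<forall>j. \<exists>N. \<forall>n\<ge>N. norm (\<Sum>i. w (i + n)) < \<eta> * t / 4 ^ Suc j"
  proof
    fix j :: nat
    have "0 < \<eta> * t / 4 ^ Suc j" using eta t by simp
    then show "\<exists>N. \<forall>n\<ge>N. norm (\<Sum>i. w (i + n)) < \<eta> * t / 4 ^ Suc j"
      using smw by (rule suminf_exist_split)
  qed
  from choice[OF this] obtain Nf where Nf: "\<And>j n. Nf j \<le> n \<Longrightarrow> norm (\<Sum>i. w (i + n)) < \<eta> * t / 4 ^ Suc j"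
    by blast
  define n where "n = (\<lambda>j. \<Sum>l<j. Suc (Nf (Suc l)))"
  have n0: "n 0 = 0" unfolding n_def by simp
  have nSuc: "n (Suc j) = n j + Suc (Nf (Suc j))" for j unfolding n_def by simp
  have nmono: "n j \<le> n (Suc j)" for j using nSuc[of j] by simp
  have nge: "j \<le> n j" for j by (induction j) (auto simp: nSuc n0)
  have nN: "Nf (Suc j) \<le> n (Suc j)" for j using nSuc[of j] by simp
  define B where "B = (\<lambda>j. {n j..<n (Suc j)})"
  define tj where "tj = (\<lambda>j::nat. t / 2 ^ Suc j)"
  define ej where "ej = (\<lambda>j::nat. \<eta> / 2 ^ Suc j)"
  have "\<forall>j. \<exists>C::nat \<Rightarrow> 'b set. (\<forall>i. bounded (C i)) \<and>
     {y. tj j < (\<Sum>i\<in>B j. if y \<in> cball (x i) (r i) then c i else 0)} \<subseteq> (\<Union>i. C i) \<and>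
     (\<Sum>i. ennreal (diameter (C i) powr q)) \<le> ennreal ((\<Sum>i\<in>B j. c i * (10 * r i) powr q) / tj j + ej j)"
  proof
    fix j
    show "\<exists>C::nat \<Rightarrow> 'b set. (\<forall>i. bounded (C i)) \<and>
     {y. tj j < (\<Sum>i\<in>B j. if y \<in> cball (x i) (r i) then c i else 0)} \<subseteq> (\<Union>i. C i) \<and>
     (\<Sum>i. ennreal (diameter (C i) powr q)) \<le> ennreal ((\<Sum>i\<in>B j. c i * (10 * r i) powr q) / tj j + ej j)"
      by (rule weighted_finite) (use r c t q eta in \<open>auto simp: B_def tj_def ej_def\<close>)
  qed
  from choice[OF this] obtain Cb :: "nat \<Rightarrow> nat \<Rightarrow> 'b set" where Cb:
    "\<And>j. (\<forall>i. bounded (Cb j i)) \<and>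
     {y. tj j < (\<Sum>i\<in>B j. if y \<in> cball (x i) (r i) then c i else 0)} \<subseteq> (\<Union>i. Cb j i) \<and>
     (\<Sum>i. ennreal (diameter (Cb j i) powr q)) \<le> ennreal ((\<Sum>i\<in>B j. c i * (10 * r i) powr q) / tj j + ej j)"
    by blast
  have Wb: "(\<Sum>i\<in>B j. w i) / tj j + ej j \<le> 4 * (K / t + \<eta>) / 2 ^ Suc j" for j
  proof (cases j)
    case 0
    have "(\<Sum>i\<in>B j. w i) \<le> (\<Sum>i. w (i + n j))"
      unfolding B_def using smw w0 nmono by (rule block_le_tail)
    then have "(\<Sum>i\<in>B j. w i) \<le> K" using 0 n0 K_def by simp
    then have a: "2 * (\<Sum>i\<in>B j. w i) / t \<le> 2 * K / t" using t by (simp add: divide_right_mono)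
    have b: "(\<Sum>i\<in>B j. w i) / tj j + ej j = 2 * (\<Sum>i\<in>B j. w i) / t + \<eta> / 2"
      using 0 by (simp add: tj_def ej_def)
    have c: "4 * (K / t + \<eta>) / 2 ^ Suc j = 2 * K / t + 2 * \<eta>" using 0 by simp
    show ?thesis unfolding b c using a eta by linarith
  next
    case (Suc l)
    have "(\<Sum>i\<in>B j. w i) \<le> (\<Sum>i. w (i + n j))"
      unfolding B_def using smw w0 nmono by (rule block_le_tail)
    also have "\<dots> \<le> norm (\<Sum>i. w (i + n j))" by simp
    also have "\<dots> < \<eta> * t / 4 ^ Suc j" using Nf[of j "n j"] nN[of l] Suc by simp
    finally have h: "(\<Sum>i\<in>B j. w i) \<le> \<eta> * t / 4 ^ Suc j" by simp
    have p4: "(4::real) ^ Suc j = 2 ^ Suc j * 2 ^ Suc j"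
      by (metis mult_2 numeral_Bit0 power_mult_distrib numeral_One one_add_one)
    have h': "(\<Sum>i\<in>B j. w i) * (2 ^ Suc j * 2 ^ Suc j) \<le> \<eta> * t"
      using h unfolding p4 by (simp add: le_divide_eq)
    have "(\<Sum>i\<in>B j. w i) / tj j \<le> \<eta> / 2 ^ Suc j"
      unfolding tj_def by (rule aux_div) (use h' t in auto)
    then have "(\<Sum>i\<in>B j. w i) / tj j + ej j \<le> 2 * \<eta> / 2 ^ Suc j" by (simp add: ej_def)
    also have "\<dots> \<le> 4 * (K / t + \<eta>) / 2 ^ Suc j"
      using K0 t eta by (intro divide_right_mono) (simp_all add: field_simps)
    finally show ?thesis .
  qed
  define C where "C = (\<lambda>n. case_prod Cb (prod_decode n))"
  have bC: "\<forall>i. bounded (C i)"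
  proof
    fix m show "bounded (C m)" unfolding C_def using Cb by (cases "prod_decode m") auto
  qed
  have cov: "{y. ennreal t < (\<Sum>i. ennreal (if y \<in> cball (x i) (r i) then c i else 0))} \<subseteq> (\<Union>i. C i)"
  proof
    fix y assume "y \<in> {y. ennreal t < (\<Sum>i. ennreal (if y \<in> cball (x i) (r i) then c i else 0))}"
    then have y: "ennreal t < (\<Sum>i. ennreal (if y \<in> cball (x i) (r i) then c i else 0))" by simp
    define g where "g = (\<lambda>i. if y \<in> cball (x i) (r i) then c i else 0)"
    have g0: "0 \<le> g i" for i unfolding g_def using c[of i] by simp
    have "\<exists>j. tj j < (\<Sum>i\<in>B j. g i)"
    proof (rule ccontr)
      assume "\<not> (\<exists>j. tj j < (\<Sum>i\<in>B j. g i))"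
      then have le: "(\<Sum>i\<in>B j. g i) \<le> tj j" for j by (simp add: not_less)
      have part: "sum g {..<m} \<le> t" for m
      proof -
        have "sum g {..<m} \<le> sum g {..<n m}"
          using nge[of m] g0 by (intro sum_mono2) auto
        also have "\<dots> = (\<Sum>j<m. sum g (B j))" unfolding B_def by (rule sum_blocks[OF nmono n0])
        also have "\<dots> \<le> (\<Sum>j<m. tj j)" using le by (rule sum_mono)
        also have "\<dots> \<le> (\<Sum>j. tj j)"
          unfolding tj_def using half_sums[of t] t by (intro sum_le_suminf) (auto simp: sums_iff)
        also have "\<dots> = t" unfolding tj_def using half_sums[of t] by (rule sums_unique[symmetric])
        finally show ?thesis .
      qed
      have "(\<Sum>i. ennreal (g i)) \<le> ennreal t"
      proof (rule suminf_le_const)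
        show "summable (\<lambda>i. ennreal (g i))" by simp
        fix m show "(\<Sum>i<m. ennreal (g i)) \<le> ennreal t"
          using part[of m] g0 by (simp add: ennreal_leI)
      qed
      with y show False unfolding g_def by simp
    qed
    then obtain j where j: "tj j < (\<Sum>i\<in>B j. g i)" by blast
    then have "y \<in> (\<Union>i. Cb j i)" using Cb[of j] unfolding g_def by blast
    then obtain i where i: "y \<in> Cb j i" by blast
    have "C (prod_encode (j, i)) = Cb j i" unfolding C_def by simp
    with i show "y \<in> (\<Union>i. C i)" by (metis UN_I UNIV_I)
  qed
  have "(\<Sum>m. ennreal (diameter (C m) powr q)) = (\<Sum>j. \<Sum>i. ennreal (diameter (Cb j i) powr q))"
    unfolding C_def by (rule merge_covers_sum)
  also have "\<dots> \<le> (\<Sum>j. ennreal (4 * (K / t + \<eta>) / 2 ^ Suc j))"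
  proof (rule suminf_le)
    fix j
    have "(\<Sum>i. ennreal (diameter (Cb j i) powr q)) \<le> ennreal ((\<Sum>i\<in>B j. w i) / tj j + ej j)"
      using Cb[of j] unfolding w_def by blast
    also have "\<dots> \<le> ennreal (4 * (K / t + \<eta>) / 2 ^ Suc j)" using Wb[of j] by (rule ennreal_leI)
    finally show "(\<Sum>i. ennreal (diameter (Cb j i) powr q)) \<le> ennreal (4 * (K / t + \<eta>) / 2 ^ Suc j)" .
  qed auto
  also have "\<dots> = ennreal (4 * (K / t + \<eta>))"
    by (rule half_series_ennreal) (use K0 t eta in simp)
  finally show ?thesis using bC cov unfolding K_def w_def by blast
qed

lemma aux_lin: "a \<le> e / 8 \<Longrightarrow> 4 * (a + e / 8) \<le> (e::real)"
  by (simp add: field_simps)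

lemma level_cover:
  fixes f :: "'a::metric_space \<Rightarrow> 'b::euclidean_space"
  assumes cont: "continuous_on UNIV f" and mu: "0 < \<mu>" and q: "0 < q"
    and Phi0: "Phi \<mu> q f E = 0" and s: "0 < s" and eps: "0 < \<epsilon>"
  shows "\<exists>C::nat \<Rightarrow> 'b set. (\<forall>i. bounded (C i)) \<and>
    {y. \<forall>C. (E \<inter> f -` {y} \<subseteq> (\<Union>i. C i) \<and> (\<forall>i. bounded (C i))) \<longrightarrow> ennreal s \<le> (\<Sum>i. ennreal (diameter (C i) powr \<mu>))} \<subseteq> (\<Union>i. C i) \<and>
    (\<Sum>i. ennreal (diameter (C i) powr q)) \<le> ennreal \<epsilon>"
proof -
  define t where "t = s / 2"
  have t: "0 < t" "t < s" using s by (simp_all add: t_def)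
  define \<eta> where "\<eta> = \<epsilon> / 8"
  have eta: "0 < \<eta>" using eps by (simp add: \<eta>_def)
  define \<delta> where "\<delta> = \<epsilon> * t / (8 * 10 powr q)"
  have delta: "0 < \<delta>" using eps t by (simp add: \<delta>_def)
  let ?g = "\<lambda>D. ennreal ((diameter D) powr \<mu> * (diameter (f ` D)) powr q)"
  have "Phi \<mu> q f E < ennreal \<delta>" using Phi0 delta by simp
  then have "\<exists>D. ((\<forall>i. compact (D i)) \<and> E \<subseteq> (\<Union>i. D i)) \<and> (\<Sum>i. ?g (D i)) < ennreal \<delta>"
    unfolding Phi_def by (subst (asm) INF_less_iff) auto
  then obtain D where D0: "((\<forall>i. compact (D i)) \<and> E \<subseteq> (\<Union>i. D i)) \<and> (\<Sum>i. ?g (D i)) < ennreal \<delta>"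
    by (rule exE)
  note D = conjunct1[OF conjunct1[OF D0]] conjunct2[OF conjunct1[OF D0]] conjunct2[OF D0]
  define w where "w = (\<lambda>i. (diameter (D i)) powr \<mu> * (diameter (f ` D i)) powr q)"
  have w0: "0 \<le> w i" for i unfolding w_def by simp
  have "(\<Sum>i. ennreal (w i)) < top"
    unfolding w_def by (rule order.strict_trans[OF D(3)]) simp
  then have "(\<Sum>i. ennreal (w i)) \<noteq> top" unfolding less_top .
  then have smw: "summable w" using w0 by (intro summable_suminf_not_top) auto
  have "ennreal (suminf w) < ennreal \<delta>" using D(3) suminf_ennreal2[OF w0 smw] unfolding w_def by simp
  moreover have "0 \<le> suminf w" using smw w0 by (rule suminf_nonneg)
  ultimately have Wd: "suminf w < \<delta>" using ennreal_less_iff by blast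
  define S where "S = (\<lambda>i. f ` D i)"
  have Sc: "compact (S i)" for i
    unfolding S_def using D(1) by (intro compact_continuous_image continuous_on_subset[OF cont]) auto
  have Sb: "bounded (S i)" for i using Sc[of i] by (rule compact_imp_bounded)
  define xs where "xs = (\<lambda>i. SOME z. z \<in> S i)"
  define r where "r = (\<lambda>i. diameter (S i))"
  have r0: "0 \<le> r i" for i unfolding r_def using Sb by (rule diameter_ge_0)
  define c where "c = (\<lambda>i. if S i = {} then 0 else diameter (D i) powr \<mu>)"
  have c0: "0 \<le> c i" for i unfolding c_def by simp
  have cw: "c i * (10 * r i) powr q \<le> 10 powr q * w i" for i
  proof -
    have "c i \<le> diameter (D i) powr \<mu>" unfolding c_def by simp
    then have "c i * (10 * r i) powr q \<le> diameter (D i) powr \<mu> * (10 * r i) powr q"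
      by (rule mult_right_mono) simp
    also have "\<dots> = 10 powr q * w i" unfolding w_def r_def S_def by (simp add: powr_mult)
    finally show ?thesis .
  qed
  have smc: "summable (\<lambda>i. c i * (10 * r i) powr q)"
  proof (rule summable_comparison_test)
    show "\<exists>N. \<forall>n\<ge>N. norm (c n * (10 * r n) powr q) \<le> 10 powr q * w n"
      using cw c0 by (intro exI[of _ 0]) auto
    show "summable (\<lambda>n. 10 powr q * w n)" using smw by (rule summable_mult)
  qed
  have Kb: "(\<Sum>i. c i * (10 * r i) powr q) \<le> 10 powr q * suminf w"
  proof -
    have "(\<Sum>i. c i * (10 * r i) powr q) \<le> (\<Sum>i. 10 powr q * w i)"
      using smc smw cw by (intro suminf_le) (auto intro: summable_mult)
    also have "\<dots> = 10 powr q * suminf w" using smw by (rule suminf_mult)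
    finally show ?thesis .
  qed
  obtain C :: "nat \<Rightarrow> 'b set" where C: "\<forall>i. bounded (C i)"
    "{y. ennreal t < (\<Sum>i. ennreal (if y \<in> cball (xs i) (r i) then c i else 0))} \<subseteq> (\<Union>i. C i)"
    "(\<Sum>i. ennreal (diameter (C i) powr q)) \<le> ennreal (4 * ((\<Sum>i. c i * (10 * r i) powr q) / t + \<eta>))"
    using weighted_countable[OF r0 c0 t(1) q eta smc, of xs] by blast
  have bound: "4 * ((\<Sum>i. c i * (10 * r i) powr q) / t + \<eta>) \<le> \<epsilon>"
  proof -
    have "(\<Sum>i. c i * (10 * r i) powr q) \<le> 10 powr q * \<delta>"
    proof -
      have "10 powr q * suminf w \<le> 10 powr q * \<delta>" using Wd by (intro mult_left_mono) auto
      then show ?thesis using Kb by (rule order_trans[rotated])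
    qed
    also have "\<dots> = \<epsilon> * t / 8" unfolding \<delta>_def by simp
    finally have "(\<Sum>i. c i * (10 * r i) powr q) / t \<le> \<epsilon> / 8"
      using t by (simp add: divide_le_eq)
    then show ?thesis unfolding \<eta>_def by (rule aux_lin)
  qed
  have cov: "{y. \<forall>C. (E \<inter> f -` {y} \<subseteq> (\<Union>i. C i) \<and> (\<forall>i. bounded (C i))) \<longrightarrow> ennreal s \<le> (\<Sum>i. ennreal (diameter (C i) powr \<mu>))} \<subseteq> (\<Union>i. C i)"
  proof
    fix y assume "y \<in> {y. \<forall>C. (E \<inter> f -` {y} \<subseteq> (\<Union>i. C i) \<and> (\<forall>i. bounded (C i))) \<longrightarrow> ennreal s \<le> (\<Sum>i. ennreal (diameter (C i) powr \<mu>))}"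
    then have y: "\<And>C. E \<inter> f -` {y} \<subseteq> (\<Union>i. C i) \<Longrightarrow> (\<forall>i. bounded (C i)) \<Longrightarrow> ennreal s \<le> (\<Sum>i. ennreal (diameter (C i) powr \<mu>))"
      by blast
    define Cy where "Cy = (\<lambda>i. if y \<in> S i then D i else {})"
    have "E \<inter> f -` {y} \<subseteq> (\<Union>i. Cy i)"
    proof
      fix z assume z: "z \<in> E \<inter> f -` {y}"
      then obtain i where i: "z \<in> D i" using D(2) by blast
      then have "y \<in> S i" using z unfolding S_def by auto
      then have "z \<in> Cy i" using i unfolding Cy_def by simp
      then show "z \<in> (\<Union>i. Cy i)" by blast
    qed
    moreover have "\<forall>i. bounded (Cy i)" unfolding Cy_def using D(1) compact_imp_bounded by auto
    ultimately have s1: "ennreal s \<le> (\<Sum>i. ennreal (diameter (Cy i) powr \<mu>))" by (rule y)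
    have "(\<Sum>i. ennreal (diameter (Cy i) powr \<mu>)) \<le> (\<Sum>i. ennreal (if y \<in> cball (xs i) (r i) then c i else 0))"
    proof (rule suminf_le)
      fix i
      show "ennreal (diameter (Cy i) powr \<mu>) \<le> ennreal (if y \<in> cball (xs i) (r i) then c i else 0)"
      proof (cases "y \<in> S i")
        case True
        then have ne: "S i \<noteq> {}" by blast
        then have "xs i \<in> S i" unfolding xs_def by (metis some_in_eq)
        then have "dist (xs i) y \<le> r i" unfolding r_def using Sb True by (intro diameter_bounded_bound)
        then have "y \<in> cball (xs i) (r i)" by simp
        then show ?thesis using True ne by (simp add: Cy_def c_def)
      next
        case False
        then show ?thesis by (simp add: Cy_def)
      qed
    qed auto
    with s1 have s2: "ennreal s \<le> (\<Sum>i. ennreal (if y \<in> cball (xs i) (r i) then c i else 0))"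
      by (rule order_trans)
    have "ennreal t < ennreal s" using t s by (intro ennreal_lessI) auto
    then have "ennreal t < (\<Sum>i. ennreal (if y \<in> cball (xs i) (r i) then c i else 0))"
      using s2 by (rule less_le_trans)
    then show "y \<in> (\<Union>i. C i)" using C(2) by blast
  qed
  have "(\<Sum>i. ennreal (diameter (C i) powr q)) \<le> ennreal \<epsilon>"
    using C(3) ennreal_leI[OF bound] by (rule order_trans)
  then show ?thesis using C(1) cov by blast
qed

theorem theorem6p1:
  fixes f :: "real ^ 'n \<Rightarrow> real ^ 'd" and \<mu> q :: real
  assumes "0 < \<mu>" "\<mu> \<le> real CARD('n)"
    and "0 < q" "q \<le> real CARD('d)"
    and "continuous_on UNIV f"
  shows "(\<forall>E :: nat \<Rightarrow> (real ^ 'n) set. Phi \<mu> q f (\<Union>i. E i) \<le> (\<Sum>i. Phi \<mu> q f (E i)))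
       \<and> (\<forall>E :: (real ^ 'n) set. Phi \<mu> q f E = 0 \<longrightarrow>
            hausdorff_measure q {y :: real ^ 'd. hausdorff_measure \<mu> (E \<inter> f -` {y}) \<noteq> 0} = 0)"
proof (intro conjI allI impI)
  fix E :: "nat \<Rightarrow> (real ^ 'n) set"
  show "Phi \<mu> q f (\<Union>i. E i) \<le> (\<Sum>i. Phi \<mu> q f (E i))" by (rule Phi_subadd)
next
  have mu: "0 < \<mu>" and q: "0 < q" and cont: "continuous_on UNIV f" using assms by auto
  fix E :: "(real ^ 'n) set" assume Phi0: "Phi \<mu> q f E = 0"
  define A where "A = {y :: real ^ 'd. hausdorff_measure \<mu> (E \<inter> f -` {y}) \<noteq> 0}"
  define Ak where "Ak = (\<lambda>k::nat. {y. \<forall>C. (E \<inter> f -` {y} \<subseteq> (\<Union>i. C i) \<and> (\<forall>i. bounded (C i))) \<longrightarrow>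
      ennreal (1 / real (Suc k)) \<le> (\<Sum>i. ennreal (diameter (C i) powr \<mu>))})"
  have AA: "A \<subseteq> (\<Union>k. Ak k)"
  proof
    fix y assume "y \<in> A"
    then have ne: "hausdorff_measure \<mu> (E \<inter> f -` {y}) \<noteq> 0" by (simp add: A_def)
    have "\<exists>e>0. \<forall>C. (E \<inter> f -` {y} \<subseteq> (\<Union>i. C i) \<and> (\<forall>i. bounded (C i))) \<longrightarrow> ennreal e \<le> (\<Sum>i. ennreal (diameter (C i) powr \<mu>))"
    proof (rule ccontr)
      assume nex: "\<not> (\<exists>e>0. \<forall>C. (E \<inter> f -` {y} \<subseteq> (\<Union>i. C i) \<and> (\<forall>i. bounded (C i))) \<longrightarrow> ennreal e \<le> (\<Sum>i. ennreal (diameter (C i) powr \<mu>)))"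
      have H: "\<exists>C. E \<inter> f -` {y} \<subseteq> (\<Union>i. C i) \<and> (\<forall>i. bounded (C i)) \<and> (\<Sum>i. ennreal (diameter (C i) powr \<mu>)) < ennreal e"
        if e: "0 < e" for e
      proof -
        from nex e have "\<not> (\<forall>C. (E \<inter> f -` {y} \<subseteq> (\<Union>i. C i) \<and> (\<forall>i. bounded (C i))) \<longrightarrow> ennreal e \<le> (\<Sum>i. ennreal (diameter (C i) powr \<mu>)))"
          by blast
        then obtain C where "(E \<inter> f -` {y} \<subseteq> (\<Union>i. C i) \<and> (\<forall>i. bounded (C i))) \<and> \<not> ennreal e \<le> (\<Sum>i. ennreal (diameter (C i) powr \<mu>))"
          by blast
        then show ?thesis by (metis not_le)
      qed
      have "hausdorff_measure \<mu> (E \<inter> f -` {y}) = 0" using mu H by (rule null_crit)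
      with ne show False by simp
    qed
    then obtain e where e: "0 < e" and He: "\<And>C. E \<inter> f -` {y} \<subseteq> (\<Union>i. C i) \<Longrightarrow> (\<forall>i. bounded (C i)) \<Longrightarrow> ennreal e \<le> (\<Sum>i. ennreal (diameter (C i) powr \<mu>))"
      by blast
    obtain k where k: "inverse (real (Suc k)) < e" using reals_Archimedean[OF e] by blast
    have "ennreal (1 / real (Suc k)) \<le> ennreal e" using k by (intro ennreal_leI) (simp add: inverse_eq_divide)
    then have "y \<in> Ak k" unfolding Ak_def using He order_trans by blast
    then show "y \<in> (\<Union>k. Ak k)" by blast
  qed
  show "hausdorff_measure q {y :: real ^ 'd. hausdorff_measure \<mu> (E \<inter> f -` {y}) \<noteq> 0} = 0"
    unfolding A_def[symmetric]
  proof (rule null_crit[OF q])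
    fix e :: real assume e: "0 < e"
    have "\<forall>k. \<exists>C::nat \<Rightarrow> (real ^ 'd) set. (\<forall>i. bounded (C i)) \<and> Ak k \<subseteq> (\<Union>i. C i) \<and>
       (\<Sum>i. ennreal (diameter (C i) powr q)) \<le> ennreal (e / 2 / 2 ^ Suc k)"
    proof
      fix k
      show "\<exists>C::nat \<Rightarrow> (real ^ 'd) set. (\<forall>i. bounded (C i)) \<and> Ak k \<subseteq> (\<Union>i. C i) \<and>
       (\<Sum>i. ennreal (diameter (C i) powr q)) \<le> ennreal (e / 2 / 2 ^ Suc k)"
        unfolding Ak_def by (rule level_cover[OF cont mu q Phi0]) (use e in simp_all)
    qed
    from choice[OF this] obtain Ck :: "nat \<Rightarrow> nat \<Rightarrow> (real ^ 'd) set" where Ck: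
      "\<And>k. (\<forall>i. bounded (Ck k i)) \<and> Ak k \<subseteq> (\<Union>i. Ck k i) \<and>
       (\<Sum>i. ennreal (diameter (Ck k i) powr q)) \<le> ennreal (e / 2 / 2 ^ Suc k)"
      by blast
    define C where "C = (\<lambda>n. case_prod Ck (prod_decode n))"
    have bC: "\<forall>i. bounded (C i)"
    proof
      fix m show "bounded (C m)" unfolding C_def using Ck by (cases "prod_decode m") auto
    qed
    have Akc: "Ak k \<subseteq> (\<Union>i. Ck k i)" for k using Ck by blast
    have "A \<subseteq> (\<Union>k. Ak k)" by (rule AA)
    also have "\<dots> \<subseteq> (\<Union>k. \<Union>i. Ck k i)"
    proof (rule UN_least)
      fix k show "Ak k \<subseteq> (\<Union>k. \<Union>i. Ck k i)"
        by (rule order_trans[OF Akc[of k]]) (rule UN_upper, rule UNIV_I)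
    qed
    also have "\<dots> = (\<Union>i. C i)" unfolding C_def by (rule merge_covers_Un)
    finally have cov: "A \<subseteq> (\<Union>i. C i)" .
    have "(\<Sum>m. ennreal (diameter (C m) powr q)) = (\<Sum>k. \<Sum>i. ennreal (diameter (Ck k i) powr q))"
      unfolding C_def by (rule merge_covers_sum)
    also have "\<dots> \<le> (\<Sum>k. ennreal (e / 2 / 2 ^ Suc k))"
    proof (rule suminf_le)
      fix k show "(\<Sum>i. ennreal (diameter (Ck k i) powr q)) \<le> ennreal (e / 2 / 2 ^ Suc k)"
        using Ck[of k] by blast
    qed auto
    also have "\<dots> = ennreal (e / 2)" by (rule half_series_ennreal) (use e in simp)
    also have "\<dots> < ennreal e" using e by (intro ennreal_lessI) auto
    finally show "\<exists>C. A \<subseteq> (\<Union>i. C i) \<and> (\<forall>i. bounded (C i)) \<and> (\<Sum>i. ennreal (diameter (C i) powr q)) < ennreal e"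
      using cov bC by blast
  qed
qed

end
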